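(* Let $\hat T>0$ and $\varepsilon_0\in(0,1)$, and define $\phi_{\varepsilon_0}(s)=1-e^{-(n-1)a^*s}(1-\varepsilon_0)$ for $s\in[0,\hat T]$ (a strictly increasing function with values in $[\varepsilon_0,1)$ and $\phi_{\varepsilon_0}(0)=\varepsilon_0$). For any trajectory of system (5), any $t_0\ge0$, any constant $\hat c_0>0$, any $i\in\mathcal V_F$ and any $t_1\ge t_0$ with $|x_i(t_1)|_{\mathcal L(y(t_1))}\le\varepsilon_0|x(t_0)|_{\mathcal L(y(t_0))}+\hat c_0$, we have $$|x_i(t)|_{\mathcal L(y(t))}\le\phi_{\varepsilon_0}(t-t_1)\,|x(t_0)|_{\mathcal L(y(t_0))}+\hat c_0+2\sqrt2\int_{t_0}^{t_1+\hat T}|z(s)|\,ds\quad\text{for all }t\in[t_1,t_1+\hat T].$$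
   Context: Standing setup. Fix integers $n\ge 2$, $k\ge 1$, $d\ge 1$. The follower set is $\mathcal V_F=\{1,\dots,n\}$ and the leader set is $\mathcal V_L=\{\hat 1,\dots,\hat k\}$ (disjoint from $\mathcal V_F$); $\mathcal V=\mathcal V_F\cup\mathcal V_L$. The interaction topology is a time-varying digraph $\mathcal G_{\sigma(t)}=(\mathcal V,\mathcal E_{\sigma(t)})$, where $\sigma:[0,\infty)\to\mathcal P$ is a piecewise constant switching signal taking values in a finite set $\mathcal P$ of digraphs on $\mathcal V$; no arc of any of these digraphs enters a leader. An arc $(j,i)$ means that $i$ receives information from $j$. Dwell-time assumption: any two consecutive switching instants of $\sigma$ are separated by at least $\tau_D>0$. For $i\in\mathcal V_F$, $N_i(\sigma(t))=\{j\in\mathcal V_F:(j,i)\in\mathcal E_{\sigma(t)}\}$ and $L_i(\sigma(t))=\{j\in\mathcal V_L:(j,i)\in\mathcal E_{\sigma(t)}\}$. System (5): $\dot y_i=u_i(y,t)$ for $i=1,\dots,k$, and $\dot x_i=\sum_{j\in N_i(\sigma(t))}a_{ij}(x,y,t)(x_j-x_i)+\sum_{j\in L_i(\sigma(t))}b_{ij}(x,y,t)(y_j-x_i)+w_i(t)$ for $i=1,\dots,n$, where $x_i,y_j\in\mathbb R^d$, $x=(x_1,\dots,x_n)$, $y=(y_1,\dots,y_k)$; each $u_i(y,t)$ is continuous in $y$ and piecewise continuous in $t$; each $w_i$ is continuous; the weights $a_{ij},b_{ij}$ are continuous and satisfy $a_*\le a_{ij}(x,y,t)\le a^*$, $b_{ij}(x,y,t)\ge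 b_*$ for all $x,y,t$, with constants $0<a_*\le a^*$, $b_*>0$. Along a trajectory, $z(t)=(u_1(y(t),t),\dots,u_k(y(t),t),w_1(t),\dots,w_n(t))\in\mathbb R^{(n+k)d}$. Set notation: $|\cdot|$ is the Euclidean norm; for a closed convex $K\subset\mathbb R^d$, $|v|_K=\inf_{p\in K}|v-p|$; $\mathcal L(y(t))=\mathrm{co}\{y_1(t),\dots,y_k(t)\}$ (convex hull); $|x(t)|_{\mathcal L(y(t))}=\max_{i\in\mathcal V_F}|x_i(t)|_{\mathcal L(y(t))}$. *)

theory Defs
  imports "HOL-Analysis.Analysis"
begin

text \<open>Vertices: followers are the finite type 'f (n = CARD('f)), leaders the finite
  type 'l (k = CARD('l)); a vertex is Inl i (follower) or Inr j (leader).
  A digraph is a set of arcs; an arc (p,q) means q receives information from p.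
  States live in an abstract Euclidean space 'a (R^d, d = DIM('a)).\<close>

type_synonym ('f, 'l) digraph = "(('f + 'l) \<times> ('f + 'l)) set"

definition piecewise_continuous :: "(real \<Rightarrow> 'b::topological_space) \<Rightarrow> bool" where
  "piecewise_continuous f \<longleftrightarrow>
     (\<forall>T\<ge>0. \<exists>D. finite D \<and> D \<subseteq> {0..T} \<and> continuous_on ({0..T} - D) f \<and>
        (\<forall>t\<in>D. (0 < t \<longrightarrow> (\<exists>l. (f \<longlongrightarrow> l) (at_left t))) \<and>
                 (\<exists>l. (f \<longlongrightarrow> l) (at_right t))))"

definition switching_signal ::
  "('f, 'l) digraph set \<Rightarrow> real \<Rightarrow> (real \<Rightarrow> ('f, 'l) digraph) \<Rightarrow> bool" where
  "switching_signal P tauD \<sigma> \<longleftrightarrow>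
     finite P \<and> tauD > 0 \<and>
     (\<forall>G\<in>P. \<forall>(p, q)\<in>G. \<forall>j. q \<noteq> Inr j) \<and>
     (\<forall>t\<ge>0. \<sigma> t \<in> P) \<and>
     (\<exists>s::nat \<Rightarrow> real. s 0 = 0 \<and> (\<forall>m. s (Suc m) - s m \<ge> tauD) \<and>
        (\<forall>m. \<forall>t\<in>{s m..<s (Suc m)}. \<sigma> t = \<sigma> (s m)))"

definition follower_rhs ::
  "(real \<Rightarrow> ('f::finite, 'l::finite) digraph) \<Rightarrow>
   ('f \<Rightarrow> 'f \<Rightarrow> ('f \<Rightarrow> 'a) \<Rightarrow> ('l \<Rightarrow> 'a) \<Rightarrow> real \<Rightarrow> real) \<Rightarrow>
   ('f \<Rightarrow> 'l \<Rightarrow> ('f \<Rightarrow> 'a) \<Rightarrow> ('l \<Rightarrow> 'a) \<Rightarrow> real \<Rightarrow> real) \<Rightarrow>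
   ('f \<Rightarrow> real \<Rightarrow> 'a::real_vector) \<Rightarrow> ('f \<Rightarrow> 'a) \<Rightarrow> ('l \<Rightarrow> 'a) \<Rightarrow> real \<Rightarrow> 'f \<Rightarrow> 'a" where
  "follower_rhs \<sigma> a b w X Y t i =
     (\<Sum>j\<in>{j. (Inl j, Inl i) \<in> \<sigma> t}. a i j X Y t *\<^sub>R (X j - X i)) +
     (\<Sum>j\<in>{j. (Inr j, Inl i) \<in> \<sigma> t}. b i j X Y t *\<^sub>R (Y j - X i)) + w i t"

definition system5_data ::
  "('f::finite, 'l::finite) digraph set \<Rightarrow> real \<Rightarrow> (real \<Rightarrow> ('f, 'l) digraph) \<Rightarrow>
   ('f \<Rightarrow> 'f \<Rightarrow> ('f \<Rightarrow> 'a) \<Rightarrow> ('l \<Rightarrow> 'a) \<Rightarrow> real \<Rightarrow> real) \<Rightarrow>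
   ('f \<Rightarrow> 'l \<Rightarrow> ('f \<Rightarrow> 'a) \<Rightarrow> ('l \<Rightarrow> 'a) \<Rightarrow> real \<Rightarrow> real) \<Rightarrow>
   ('l \<Rightarrow> ('l \<Rightarrow> 'a) \<Rightarrow> real \<Rightarrow> 'a) \<Rightarrow> ('f \<Rightarrow> real \<Rightarrow> 'a::euclidean_space) \<Rightarrow>
   real \<Rightarrow> real \<Rightarrow> real \<Rightarrow> bool" where
  "system5_data P tauD \<sigma> a b u w a_lo a_up b_lo \<longleftrightarrow>
     switching_signal P tauD \<sigma> \<and>
     0 < a_lo \<and> a_lo \<le> a_up \<and> 0 < b_lo \<and>
     (\<forall>i j. continuous_on UNIV (\<lambda>(X, Y, t). a i j X Y t)) \<and>
     (\<forall>i j. continuous_on UNIV (\<lambda>(X, Y, t). b i j X Y t)) \<and>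
     (\<forall>i j X Y t. a_lo \<le> a i j X Y t \<and> a i j X Y t \<le> a_up) \<and>
     (\<forall>i j X Y t. b_lo \<le> b i j X Y t) \<and>
     (\<forall>i t. continuous_on UNIV (\<lambda>Y. u i Y t)) \<and>
     (\<forall>i Y. piecewise_continuous (\<lambda>t. u i Y t)) \<and>
     (\<forall>i. continuous_on {0..} (w i))"

definition system5_traj ::
  "(real \<Rightarrow> ('f::finite, 'l::finite) digraph) \<Rightarrow>
   ('f \<Rightarrow> 'f \<Rightarrow> ('f \<Rightarrow> 'a) \<Rightarrow> ('l \<Rightarrow> 'a) \<Rightarrow> real \<Rightarrow> real) \<Rightarrow>
   ('f \<Rightarrow> 'l \<Rightarrow> ('f \<Rightarrow> 'a) \<Rightarrow> ('l \<Rightarrow> 'a) \<Rightarrow> real \<Rightarrow> real) \<Rightarrow>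
   ('l \<Rightarrow> ('l \<Rightarrow> 'a) \<Rightarrow> real \<Rightarrow> 'a) \<Rightarrow> ('f \<Rightarrow> real \<Rightarrow> 'a::euclidean_space) \<Rightarrow>
   ('f \<Rightarrow> real \<Rightarrow> 'a) \<Rightarrow> ('l \<Rightarrow> real \<Rightarrow> 'a) \<Rightarrow> bool" where
  "system5_traj \<sigma> a b u w x y \<longleftrightarrow>
     (\<forall>i. continuous_on {0..} (x i)) \<and> (\<forall>j. continuous_on {0..} (y j)) \<and>
     (\<exists>S. countable S \<and>
        (\<forall>t\<in>{0..} - S.
           (\<forall>j. (y j has_vector_derivative u j (\<lambda>l. y l t) t) (at t within {0..})) \<and>
           (\<forall>i. (x i has_vector_derivative
                   follower_rhs \<sigma> a b w (\<lambda>l. x l t) (\<lambda>l. y l t) t i) (at t within {0..}))))"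

definition leader_hull :: "('l::finite \<Rightarrow> real \<Rightarrow> 'a::euclidean_space) \<Rightarrow> real \<Rightarrow> 'a set" where
  "leader_hull y t = convex hull (range (\<lambda>j. y j t))"

definition dist_hull_max ::
  "('f::finite \<Rightarrow> real \<Rightarrow> 'a::euclidean_space) \<Rightarrow> ('l::finite \<Rightarrow> real \<Rightarrow> 'a) \<Rightarrow> real \<Rightarrow> real" where
  "dist_hull_max x y t = Max (range (\<lambda>i. infdist (x i t) (leader_hull y t)))"

definition z_norm ::
  "('l::finite \<Rightarrow> ('l \<Rightarrow> 'a) \<Rightarrow> real \<Rightarrow> 'a::euclidean_space) \<Rightarrow> ('f::finite \<Rightarrow> real \<Rightarrow> 'a) \<Rightarrow>
   ('l \<Rightarrow> real \<Rightarrow> 'a) \<Rightarrow> real \<Rightarrow> real" where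
  "z_norm u w y t = sqrt ((\<Sum>j\<in>UNIV. (norm (u j (\<lambda>l. y l t) t))\<^sup>2) + (\<Sum>i\<in>UNIV. (norm (w i t))\<^sup>2))"

definition phi_eps :: "nat \<Rightarrow> real \<Rightarrow> real \<Rightarrow> real \<Rightarrow> real" where
  "phi_eps n a_up eps0 s = 1 - exp (- (real n - 1) * a_up * s) * (1 - eps0)"

end

theory Submission
  imports Defs
begin


lemma geom_half_le2:
  fixes N :: "nat set" assumes "finite N"
  shows "(\<Sum>n\<in>N. (1/2::real)^n) \<le> 2"
proof -
  obtain m where m: "N \<subseteq> {..<m}"
    using assms finite_nat_iff_bounded by auto
  have "(\<Sum>n\<in>N. (1/2::real)^n) \<le> (\<Sum>n<m. (1/2::real)^n)"
    by (rule sum_mono2) (use m in auto)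
  also have "(\<Sum>n<m. (1/2::real)^n) = 2 - 2 * (1/2)^m"
    by (induction m) (auto simp: field_simps)
  also have "\<dots> \<le> 2" by simp
  finally show ?thesis .
qed

lemma geom_idx_le2:
  assumes "countable C" "finite X" "X \<subseteq> C"
  shows "(\<Sum>x\<in>X. (1/2::real)^(to_nat_on C x)) \<le> 2"
proof -
  have inj: "inj_on (to_nat_on C) X"
    using inj_on_to_nat_on[OF assms(1)] assms(3) inj_on_subset by blast
  have "(\<Sum>x\<in>X. (1/2::real)^(to_nat_on C x)) = (\<Sum>n\<in>to_nat_on C ` X. (1/2::real)^n)"
    using sum.reindex[OF inj, of "\<lambda>n. (1/2::real)^n"] by simp
  also have "\<dots> \<le> 2" using geom_half_le2 assms(2) by blast
  finally show ?thesis .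
qed



lemma ftc_countable:
  fixes f :: "real \<Rightarrow> 'a::banach"
  assumes ab: "a \<le> b" and C: "countable C" and cf: "continuous_on {a..b} f"
    and der: "\<And>x. x \<in> {a..b} - C \<Longrightarrow> (f has_vector_derivative f' x) (at x within {a..b})"
  shows "(f' has_integral (f b - f a)) {a..b}"
  unfolding has_integral_real
proof (intro allI impI)
  fix e :: real assume e: "e > 0"
  define \<epsilon> where "\<epsilon> = e / (b - a + 5)"
  have \<epsilon>: "\<epsilon> > 0" using e ab by (simp add: \<epsilon>_def)
  define E where "E x = \<epsilon> / 2 * (1/2) ^ (to_nat_on C x)" for x
  have Epos: "E x > 0" for x using \<epsilon> by (simp add: E_def)
  have "\<exists>d>0. (x \<in> {a..b} - C \<longrightarrow> (\<forall>y\<in>{a..b}. norm (y - x) < d \<longrightarrow> norm (f y - f x - (y - x) *\<^sub>R f' x) \<le> \<epsilon> * norm (y - x)))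
        \<and> (x \<in> {a..b} \<inter> C \<longrightarrow> (\<forall>y\<in>{a..b}. norm (y - x) < d \<longrightarrow> norm (f y - f x) + norm (f' x) * norm (y - x) \<le> E x))" for x
  proof (cases "x \<in> {a..b}")
    case False then show ?thesis by (intro exI[of _ 1]) auto
  next
    case xin: True
    show ?thesis
    proof (cases "x \<in> C")
      case False
      then have "(f has_vector_derivative f' x) (at x within {a..b})" using der xin by auto
      then obtain d where "d > 0" "\<forall>y\<in>{a..b}. norm (y - x) < d \<longrightarrow> norm (f y - f x - (y - x) *\<^sub>R f' x) \<le> \<epsilon> * norm (y - x)"
        using \<epsilon> unfolding has_vector_derivative_def has_derivative_within_alt by blast
      then show ?thesis using False by (intro exI[of _ d]) auto
    next
      case True
      have "E x / 2 > 0" using Epos by simp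
      then obtain d1 where d1: "d1 > 0" "\<forall>y\<in>{a..b}. dist y x < d1 \<longrightarrow> dist (f y) (f x) < E x / 2"
        using cf xin unfolding continuous_on_iff by blast
      define d where "d = min d1 (E x / 2 / (norm (f' x) + 1))"
      have "norm (f' x) + 1 > 0" by (simp add: add_nonneg_pos)
      then have dpos: "d > 0" using d1 Epos[of x] by (simp add: d_def)
      have "norm (f y - f x) + norm (f' x) * norm (y - x) \<le> E x" if "y \<in> {a..b}" "norm (y - x) < d" for y
      proof -
        have "norm (f y - f x) < E x / 2" using d1 that by (auto simp: d_def dist_norm)
        moreover have "norm (f' x) * norm (y - x) \<le> E x / 2"
        proof -
          have "norm (y - x) \<le> E x / 2 / (norm (f' x) + 1)" using that by (simp add: d_def)
          then have "(norm (f' x) + 1) * norm (y - x) \<le> E x / 2"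
            using \<open>norm (f' x) + 1 > 0\<close> by (simp add: pos_le_divide_eq mult.commute algebra_simps)
          moreover have "norm (f' x) * norm (y - x) \<le> (norm (f' x) + 1) * norm (y - x)"
            by (simp add: mult_right_mono)
          ultimately show ?thesis by linarith
        qed
        ultimately show ?thesis by linarith
      qed
      then show ?thesis using dpos \<open>x \<in> C\<close> by (intro exI[of _ d]) auto
    qed
  qed
  then obtain d where d: "\<And>x. d x > 0"
    "\<And>x y. x \<in> {a..b} - C \<Longrightarrow> y \<in> {a..b} \<Longrightarrow> norm (y - x) < d x \<Longrightarrow> norm (f y - f x - (y - x) *\<^sub>R f' x) \<le> \<epsilon> * norm (y - x)"
    "\<And>x y. x \<in> {a..b} \<inter> C \<Longrightarrow> y \<in> {a..b} \<Longrightarrow> norm (y - x) < d x \<Longrightarrow> norm (f y - f x) + norm (f' x) * norm (y - x) \<le> E x"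
    by metis
  show "\<exists>\<gamma>. gauge \<gamma> \<and> (\<forall>\<D>. \<D> tagged_division_of {a..b} \<and> \<gamma> fine \<D> \<longrightarrow>
        norm ((\<Sum>(x, k)\<in>\<D>. Henstock_Kurzweil_Integration.content k *\<^sub>R f' x) - (f b - f a)) < e)"
  proof (intro exI conjI allI impI)
    show "gauge (\<lambda>x. ball x (d x))" using d(1) gauge_ball_dependent by blast
    fix p assume "p tagged_division_of {a..b} \<and> (\<lambda>x. ball x (d x)) fine p"
    then have ptag: "p tagged_division_of {a..b}" and finep: "(\<lambda>x. ball x (d x)) fine p" by auto
    have finp: "finite p" using ptag by blast
    have ba: "b - a = (\<Sum>(x,K)\<in>p. Sup K - Inf K)" "f b - f a = (\<Sum>(x,K)\<in>p. f(Sup K) - f(Inf K))"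
      using additive_tagged_division_1[where f= "\<lambda>x. x"] additive_tagged_division_1[where f= f]
            ab ptag by auto
    define B1 where "B1 = (\<lambda>(x::real,K::real set). if x \<notin> C then \<epsilon> * (Sup K - Inf K) else 0)"
    define B2 where "B2 = (\<lambda>(x::real,K::real set). if x \<in> C \<and> x < Sup K then E x else 0)"
    define B3 where "B3 = (\<lambda>(x::real,K::real set). if x \<in> C \<and> Inf K < x then E x else 0)"
    have geo: "\<And>x K. (x, K) \<in> p \<Longrightarrow> \<exists>u v. K = {u..v} \<and> u \<le> x \<and> x \<le> v \<and> {u..v} \<subseteq> {a..b}
                  \<and> Sup K = v \<and> Inf K = u"
    proof -
      fix x K assume xK: "(x, K) \<in> p"
      then have "x \<in> K" and kab: "K \<subseteq> {a..b}" using ptag by blast+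
      then obtain u v where k: "K = {u..v}" using ptag xK by (metis box_real(2) tagged_division_ofD(4))
      then show "\<exists>u v. K = {u..v} \<and> u \<le> x \<and> x \<le> v \<and> {u..v} \<subseteq> {a..b} \<and> Sup K = v \<and> Inf K = u"
        using \<open>x \<in> K\<close> kab by (intro exI[of _ u] exI[of _ v]) auto
    qed
    have bound: "norm (Henstock_Kurzweil_Integration.content K *\<^sub>R f' x - (f (Sup K) - f (Inf K))) \<le> B1 (x,K) + B2 (x,K) + B3 (x,K)"
      if xK: "(x, K) \<in> p" for x K
    proof -
      obtain u v where k: "K = {u..v}" "u \<le> x" "x \<le> v" "{u..v} \<subseteq> {a..b}" "Sup K = v" "Inf K = u"
        using geo[OF xK] by blast
      have xab: "x \<in> {a..b}" "u \<in> {a..b}" "v \<in> {a..b}" using k by auto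
      have ball: "\<forall>y\<in>K. y \<in> ball x (d x)" using finep xK by blast
      have "u \<in> K" "v \<in> K" using k by auto
      then have "\<bar>x - u\<bar> < d x" "\<bar>x - v\<bar> < d x"
        using ball by (auto simp: dist_real_def)
      then have nu: "norm (u - x) < d x" and nv: "norm (v - x) < d x"
        by (auto simp: abs_minus_commute)
      have split: "Henstock_Kurzweil_Integration.content K *\<^sub>R f' x - (f (Sup K) - f (Inf K)) =
          ((v - x) *\<^sub>R f' x - (f v - f x)) + ((x - u) *\<^sub>R f' x - (f x - f u))"
        using k by (simp add: algebra_simps)
      show ?thesis
      proof (cases "x \<in> C")
        case False
        have "norm (Henstock_Kurzweil_Integration.content K *\<^sub>R f' x - (f (Sup K) - f (Inf K))) =
              norm (f u - f x - (u - x) *\<^sub>R f' x - (f v - f x - (v - x) *\<^sub>R f' x))"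
          using k by (simp add: algebra_simps)
        also have "\<dots> \<le> norm (f u - f x - (u - x) *\<^sub>R f' x) + norm (f v - f x - (v - x) *\<^sub>R f' x)"
          by (rule norm_triangle_ineq4)
        also have "\<dots> \<le> \<epsilon> * norm (u - x) + \<epsilon> * norm (v - x)"
          using d(2)[of x u] d(2)[of x v] False xab nu nv by (intro add_mono) auto
        also have "\<dots> = \<epsilon> * (Sup K - Inf K)" using k by (simp add: field_simps)
        finally show ?thesis using False by (simp add: B1_def B2_def B3_def)
      next
        case True
        have t1: "norm ((v - x) *\<^sub>R f' x - (f v - f x)) \<le> (if x < v then E x else 0)"
        proof (cases "x < v")
          case True
          have "norm ((v - x) *\<^sub>R f' x - (f v - f x)) \<le> norm (f v - f x) + norm ((v - x) *\<^sub>R f' x)"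
            by (metis norm_minus_commute norm_triangle_ineq4 add.commute)
          also have "\<dots> = norm (f v - f x) + norm (f' x) * norm (v - x)" by simp
          also have "\<dots> \<le> E x" using d(3)[of x v] \<open>x \<in> C\<close> xab nv by auto
          finally show ?thesis using True by simp
        next
          case False then have "v = x" using k by auto
          then show ?thesis by simp
        qed
        have t2: "norm ((x - u) *\<^sub>R f' x - (f x - f u)) \<le> (if u < x then E x else 0)"
        proof (cases "u < x")
          case True
          have "norm ((x - u) *\<^sub>R f' x - (f x - f u)) \<le> norm (f u - f x) + norm ((u - x) *\<^sub>R f' x)"
            by (smt (verit, ccfv_threshold) minus_diff_eq norm_minus_cancel norm_triangle_ineq4 scaleR_minus_left)
          also have "\<dots> = norm (f u - f x) + norm (f' x) * norm (u - x)" by simp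
          also have "\<dots> \<le> E x" using d(3)[of x u] \<open>x \<in> C\<close> xab nu by auto
          finally show ?thesis using True by simp
        next
          case False then have "u = x" using k by auto
          then show ?thesis by simp
        qed
        have "norm (Henstock_Kurzweil_Integration.content K *\<^sub>R f' x - (f (Sup K) - f (Inf K))) \<le>
              norm ((v - x) *\<^sub>R f' x - (f v - f x)) + norm ((x - u) *\<^sub>R f' x - (f x - f u))"
          unfolding split by (rule norm_triangle_ineq)
        also have "\<dots> \<le> (if x < v then E x else 0) + (if u < x then E x else 0)"
          using t1 t2 by linarith
        finally show ?thesis using True k by (simp add: B1_def B2_def B3_def)
      qed
    qed
    have "norm ((\<Sum>(x, k)\<in>p. Henstock_Kurzweil_Integration.content k *\<^sub>R f' x) - (f b - f a))
        = norm (\<Sum>(x, K)\<in>p. Henstock_Kurzweil_Integration.content K *\<^sub>R f' x - (f (Sup K) - f (Inf K)))"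
      unfolding ba(2) by (simp add: split_def sum_subtractf)
    also have "\<dots> \<le> (\<Sum>(x, K)\<in>p. B1 (x,K) + B2 (x,K) + B3 (x,K))"
      by (rule sum_norm_le) (use bound in auto)
    also have "\<dots> = sum B1 p + sum B2 p + sum B3 p"
      by (simp add: sum.distrib split_def)
    finally have main: "norm ((\<Sum>(x, k)\<in>p. Henstock_Kurzweil_Integration.content k *\<^sub>R f' x) - (f b - f a)) \<le> sum B1 p + sum B2 p + sum B3 p" .
    have hB1: "sum B1 p \<le> \<epsilon> * (b - a)"
    proof -
      have "sum B1 p \<le> (\<Sum>(x,K)\<in>p. \<epsilon> * (Sup K - Inf K))"
      proof (rule sum_mono)
        fix xK assume "xK \<in> p"
        then obtain x K where xK: "xK = (x,K)" "(x,K) \<in> p" by (cases xK) auto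
        obtain u v where k: "K = {u..v}" "u \<le> x" "x \<le> v" "Sup K = v" "Inf K = u"
          using geo[OF xK(2)] by blast
        show "B1 xK \<le> (case xK of (x, K) \<Rightarrow> \<epsilon> * (Sup K - Inf K))"
          using k \<epsilon> xK by (auto simp: B1_def)
      qed
      also have "\<dots> = \<epsilon> * (b - a)" unfolding ba(1) by (simp add: sum_distrib_left split_def)
      finally show ?thesis .
    qed
    have hB2: "sum B2 p \<le> \<epsilon>"
    proof -
      let ?P = "{xK \<in> p. fst xK \<in> C \<and> fst xK < Sup (snd xK)}"
      have "sum B2 p = sum (\<lambda>xK. E (fst xK)) ?P"
        using finp by (simp add: sum.inter_filter B2_def split_def)
      also have "\<dots> = sum E (fst ` ?P)"
      proof (rule sum.reindex[symmetric, unfolded o_def])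
        show "inj_on fst ?P"
        proof (rule inj_onI)
          fix p1 p2 assume p1: "p1 \<in> ?P" and p2: "p2 \<in> ?P" and eq: "fst p1 = fst p2"
          obtain x K1 where q1: "p1 = (x, K1)" by (cases p1)
          obtain K2 where q2: "p2 = (x, K2)" using eq q1 by (cases p2) auto
          show "p1 = p2"
          proof (rule ccontr)
            assume ne: "p1 \<noteq> p2"
            obtain u1 v1 where k1: "K1 = {u1..v1}" "u1 \<le> x" "x \<le> v1" "Sup K1 = v1"
              using geo[of x K1] p1 q1 by auto
            obtain u2 v2 where k2: "K2 = {u2..v2}" "u2 \<le> x" "x \<le> v2" "Sup K2 = v2"
              using geo[of x K2] p2 q2 by auto
            have lt: "x < v1" "x < v2" using p1 p2 q1 q2 k1 k2 by auto
            have "interior K1 \<inter> interior K2 = {}"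
              using tagged_division_ofD(5)[OF ptag, of x K1 x K2] p1 p2 q1 q2 ne by auto
            moreover have "(x + min v1 v2) / 2 \<in> interior K1 \<inter> interior K2"
              using k1 k2 lt by auto
            ultimately show False by blast
          qed
        qed
      qed
      also have "\<dots> = \<epsilon> / 2 * (\<Sum>x\<in>fst ` ?P. (1/2) ^ to_nat_on C x)"
        by (simp add: E_def sum_distrib_left)
      also have "\<dots> \<le> \<epsilon> / 2 * 2"
        using geom_idx_le2[OF C, of "fst ` ?P"] finp \<epsilon> by (intro mult_left_mono) auto
      finally show ?thesis by simp
    qed
    have hB3: "sum B3 p \<le> \<epsilon>"
    proof -
      let ?P = "{xK \<in> p. fst xK \<in> C \<and> Inf (snd xK) < fst xK}"
      have "sum B3 p = sum (\<lambda>xK. E (fst xK)) ?P"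
        using finp by (simp add: sum.inter_filter B3_def split_def)
      also have "\<dots> = sum E (fst ` ?P)"
      proof (rule sum.reindex[symmetric, unfolded o_def])
        show "inj_on fst ?P"
        proof (rule inj_onI)
          fix p1 p2 assume p1: "p1 \<in> ?P" and p2: "p2 \<in> ?P" and eq: "fst p1 = fst p2"
          obtain x K1 where q1: "p1 = (x, K1)" by (cases p1)
          obtain K2 where q2: "p2 = (x, K2)" using eq q1 by (cases p2) auto
          show "p1 = p2"
          proof (rule ccontr)
            assume ne: "p1 \<noteq> p2"
            obtain u1 v1 where k1: "K1 = {u1..v1}" "u1 \<le> x" "x \<le> v1" "Inf K1 = u1"
              using geo[of x K1] p1 q1 by auto
            obtain u2 v2 where k2: "K2 = {u2..v2}" "u2 \<le> x" "x \<le> v2" "Inf K2 = u2"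
              using geo[of x K2] p2 q2 by auto
            have lt: "u1 < x" "u2 < x" using p1 p2 q1 q2 k1 k2 by auto
            have "interior K1 \<inter> interior K2 = {}"
              using tagged_division_ofD(5)[OF ptag, of x K1 x K2] p1 p2 q1 q2 ne by auto
            moreover have "(x + max u1 u2) / 2 \<in> interior K1 \<inter> interior K2"
              using k1 k2 lt by auto
            ultimately show False by blast
          qed
        qed
      qed
      also have "\<dots> = \<epsilon> / 2 * (\<Sum>x\<in>fst ` ?P. (1/2) ^ to_nat_on C x)"
        by (simp add: E_def sum_distrib_left)
      also have "\<dots> \<le> \<epsilon> / 2 * 2"
        using geom_idx_le2[OF C, of "fst ` ?P"] finp \<epsilon> by (intro mult_left_mono) auto
      finally show ?thesis by simp
    qed
    have "\<epsilon> * (b - a + 5) = e" using ab by (simp add: \<epsilon>_def)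
    moreover have "\<epsilon> * (b - a) + \<epsilon> + \<epsilon> < \<epsilon> * (b - a + 5)"
      using \<epsilon> by (simp add: algebra_simps)
    ultimately show "norm ((\<Sum>(x, k)\<in>p. Henstock_Kurzweil_Integration.content k *\<^sub>R f' x) - (f b - f a)) < e"
      using main hB1 hB2 hB3 by linarith
  qed
qed



lemma dini_mono:
  fixes F :: "real \<Rightarrow> real"
  assumes ab: "a \<le> b" and cF: "continuous_on {a..b} F" and C: "countable C"
    and loc: "\<And>t e. t \<in> {a..<b} - C \<Longrightarrow> e > 0 \<Longrightarrow>
               \<exists>\<delta>>0. \<forall>s. t < s \<and> s < t + \<delta> \<and> s \<le> b \<longrightarrow> F s \<le> F t + e * (s - t)"
  shows "F b \<le> F a"
proof (rule ccontr)
  assume "\<not> F b \<le> F a"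
  then have lt: "F a < F b" by simp
  have altb: "a < b" using lt ab by (cases "a = b") auto
  define \<eta> where "\<eta> = (F b - F a) / (2 * (b - a))"
  have \<eta>: "\<eta> > 0" using lt altb by (simp add: \<eta>_def)
  define g where "g t = F t - F a - \<eta> * (t - a)" for t
  have gb: "g b = (F b - F a) / 2" using altb by (simp add: g_def \<eta>_def field_simps)
  have gbpos: "g b > 0" using gb lt by simp
  have cg: "continuous_on {a..b} g" unfolding g_def by (intro continuous_intros cF)
  define T where "T c = Sup {t\<in>{a..b}. g t \<le> c}" for c
  have Tprop: "a \<le> T c \<and> T c < b \<and> g (T c) = c \<and> (\<forall>t\<in>{a..b}. T c < t \<longrightarrow> c < g t)"
    if c: "c \<in> {0<..<g b}" for c
  proof -
    let ?A = "{t\<in>{a..b}. g t \<le> c}"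
    have aA: "a \<in> ?A" using c ab by (auto simp: g_def)
    have bdd: "bdd_above ?A" by (rule bdd_aboveI[of _ b]) auto
    have cl: "closed ?A"
      using continuous_on_closed_Collect_le[OF cg continuous_on_const[of _ c]] by auto
    have TA: "T c \<in> ?A" unfolding T_def using closed_contains_Sup[OF _ bdd cl] aA by blast
    have ub: "t \<le> T c" if "t \<in> ?A" for t unfolding T_def using cSup_upper[OF that bdd] .
    have after: "\<forall>t\<in>{a..b}. T c < t \<longrightarrow> c < g t"
      using ub by force
    have "g (T c) = c"
    proof (rule ccontr)
      assume "g (T c) \<noteq> c"
      then have "g (T c) < c" using TA by auto
      moreover have "c \<le> g b" using c by simp
      moreover have "T c \<le> b" using TA by auto
      moreover have "continuous_on {T c..b} g"
        by (rule continuous_on_subset[OF cg]) (use TA in auto)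
      ultimately obtain x where x: "T c \<le> x" "x \<le> b" "g x = c"
        using IVT'[of g "T c" c b] by auto
      then have "x \<noteq> T c" using \<open>g (T c) < c\<close> by auto
      then have "T c < x" using x by auto
      moreover have "x \<in> {a..b}" using x TA by auto
      ultimately show False using after x by auto
    qed
    moreover have "T c < b"
      using TA \<open>g (T c) = c\<close> c by (cases "T c = b") auto
    ultimately show ?thesis using TA after by auto
  qed
  have inj: "inj_on T {0<..<g b}"
    by (rule inj_onI) (metis Tprop)
  obtain c where c: "c \<in> {0<..<g b}" and Tc: "T c \<notin> C"
  proof -
    have "\<not> T ` {0<..<g b} \<subseteq> C"
    proof
      assume "T ` {0<..<g b} \<subseteq> C"
      then have "countable (T ` {0<..<g b})" using C countable_subset by blast
      then have "countable {0<..<g b}" using countable_image_inj_on inj by blast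
      then show False using uncountable_open_interval gbpos by blast
    qed
    then show ?thesis using that by blast
  qed
  define t where "t = T c"
  have tp: "a \<le> t" "t < b" "g t = c" "\<forall>s\<in>{a..b}. t < s \<longrightarrow> c < g s"
    using Tprop[OF c] by (auto simp: t_def)
  have "t \<in> {a..<b} - C" using tp Tc by (auto simp: t_def)
  from loc[OF this, of "\<eta>/2"] \<eta> obtain \<delta> where \<delta>: "\<delta> > 0"
    "\<forall>s. t < s \<and> s < t + \<delta> \<and> s \<le> b \<longrightarrow> F s \<le> F t + \<eta>/2 * (s - t)" by auto
  define s where "s = min (t + \<delta>/2) b"
  have s: "t < s" "s < t + \<delta>" "s \<le> b" using \<delta> tp by (auto simp: s_def)
  then have "F s \<le> F t + \<eta>/2 * (s - t)" using \<delta> by auto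
  moreover have "\<eta>*(s-a) = \<eta>*(t-a) + 2 * (\<eta>/2*(s-t))" by (simp add: field_simps)
  ultimately have "g s \<le> g t - \<eta>/2 * (s - t)" unfolding g_def by linarith
  moreover have "\<eta>/2 * (s - t) > 0" using \<eta> s by simp
  moreover have "c < g s" using tp s by auto
  ultimately show False using tp by linarith
qed

lemma dini_mono':
  fixes F :: "real \<Rightarrow> real"
  assumes cF: "continuous_on {a..b} F" and C: "countable C"
    and loc: "\<And>t e. t \<in> {a..<b} - C \<Longrightarrow> e > 0 \<Longrightarrow>
               \<exists>\<delta>>0. \<forall>s. t < s \<and> s < t + \<delta> \<and> s \<le> b \<longrightarrow> F s \<le> F t + e * (s - t)"
    and t: "a \<le> t'" "t' \<le> b"
  shows "F t' \<le> F a"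
proof (rule dini_mono[OF t(1) _ C])
  show "continuous_on {a..t'} F" by (rule continuous_on_subset[OF cF]) (use t in auto)
  fix t e :: real assume "t \<in> {a..<t'} - C" "e > 0"
  then have "t \<in> {a..<b} - C" using t by auto
  from loc[OF this \<open>e > 0\<close>] show "\<exists>\<delta>>0. \<forall>s. t < s \<and> s < t + \<delta> \<and> s \<le> t' \<longrightarrow> F s \<le> F t + e * (s - t)"
    using t by (meson order_trans)
qed



lemma hull_compact_ne:
  fixes Y :: "'l::finite \<Rightarrow> 'a::euclidean_space"
  shows "compact (convex hull (range Y))" "convex hull (range Y) \<noteq> {}"
  by (auto intro!: finite_imp_compact_convex_hull)

lemma hull_shift:
  fixes Y1 Y2 :: "'l::finite \<Rightarrow> 'a::euclidean_space"
  assumes D: "\<And>j. norm (Y1 j - Y2 j) \<le> \<Delta>"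
  shows "infdist p (convex hull (range Y2)) \<le> infdist p (convex hull (range Y1)) + \<Delta>"
proof -
  let ?H1 = "convex hull (range Y1)" and ?H2 = "convex hull (range Y2)"
  obtain q where q: "q \<in> ?H1" "infdist p ?H1 = dist p q"
    using infdist_attains_inf[OF compact_imp_closed[OF hull_compact_ne(1)] hull_compact_ne(2)] by blast
  have fin: "finite (range Y1)" by simp
  obtain c where c: "\<forall>z\<in>range Y1. 0 \<le> c z" "sum c (range Y1) = 1" "(\<Sum>z\<in>range Y1. c z *\<^sub>R z) = q"
    using q(1) unfolding convex_hull_finite[OF fin] by blast
  define q' where "q' = (\<Sum>z\<in>range Y1. c z *\<^sub>R Y2 (inv Y1 z))"
  have q'H: "q' \<in> ?H2" unfolding q'_def
    by (rule convex_sum) (use c in \<open>auto intro: hull_inc\<close>)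
  have "q - q' = (\<Sum>z\<in>range Y1. c z *\<^sub>R (Y1 (inv Y1 z) - Y2 (inv Y1 z)))"
    unfolding c(3)[symmetric] q'_def
    by (simp add: sum_subtractf[symmetric] scaleR_diff_right f_inv_into_f)
  then have "norm (q - q') \<le> (\<Sum>z\<in>range Y1. c z * norm (Y1 (inv Y1 z) - Y2 (inv Y1 z)))"
    using c(1) by (auto intro!: order_trans[OF norm_sum] sum_mono)
  also have "\<dots> \<le> (\<Sum>z\<in>range Y1. c z * \<Delta>)"
    using c(1) D by (intro sum_mono mult_left_mono) auto
  also have "\<dots> = \<Delta>" using c(2) by (simp add: sum_distrib_right[symmetric])
  finally have qq: "dist q q' \<le> \<Delta>" by (simp add: dist_norm)
  have "infdist p ?H2 \<le> dist p q'" using q'H by (rule infdist_le)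
  also have "\<dots> \<le> dist p q + dist q q'" by (rule dist_triangle)
  finally show ?thesis using q(2) qq by linarith
qed

lemma convex_step:
  fixes z :: "'i \<Rightarrow> 'a::real_vector"
  assumes H: "convex H" "z0 \<in> H" "finite I" "\<And>k. k \<in> I \<Longrightarrow> z k \<in> H"
    "\<And>k. k \<in> I \<Longrightarrow> c k \<ge> 0" "sum c I \<le> 1"
  shows "z0 + (\<Sum>k\<in>I. c k *\<^sub>R (z k - z0)) \<in> H"
proof -
  define S where "S = insert None (Some ` I)"
  define wt where "wt = (\<lambda>ob. case ob of None \<Rightarrow> 1 - sum c I | Some k \<Rightarrow> c k)"
  define pt where "pt = (\<lambda>ob. case ob of None \<Rightarrow> z0 | Some k \<Rightarrow> z k)"
  have nS: "None \<notin> Some ` I" by auto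
  have sw: "sum g S = g None + (\<Sum>k\<in>I. g (Some k))" for g :: "'i option \<Rightarrow> 'b::comm_monoid_add"
    unfolding S_def using H(3) nS by (simp add: sum.reindex)
  have "(\<Sum>ob\<in>S. wt ob *\<^sub>R pt ob) \<in> H"
  proof (rule convex_sum)
    show "finite S" using H(3) by (simp add: S_def)
    show "sum wt S = 1" unfolding sw by (simp add: wt_def)
    show "\<And>ob. ob \<in> S \<Longrightarrow> 0 \<le> wt ob" using H by (auto simp: S_def wt_def)
    show "\<And>ob. ob \<in> S \<Longrightarrow> pt ob \<in> H" using H by (auto simp: S_def pt_def)
  qed (use H in auto)
  also have "(\<Sum>ob\<in>S. wt ob *\<^sub>R pt ob) = z0 + (\<Sum>k\<in>I. c k *\<^sub>R (z k - z0))"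
    unfolding sw by (simp add: wt_def pt_def scaleR_diff_right sum_subtractf scaleR_diff_left
        scaleR_sum_left[symmetric])
  finally show ?thesis .
qed

lemma convex_step2:
  fixes z1 :: "'i \<Rightarrow> 'a::real_vector" and z2 :: "'k \<Rightarrow> 'a"
  assumes H: "convex H" "z0 \<in> H" "finite I1" "finite I2"
    "\<And>k. k \<in> I1 \<Longrightarrow> z1 k \<in> H" "\<And>k. k \<in> I2 \<Longrightarrow> z2 k \<in> H"
    "\<And>k. k \<in> I1 \<Longrightarrow> c1 k \<ge> 0" "\<And>k. k \<in> I2 \<Longrightarrow> c2 k \<ge> 0" "sum c1 I1 + sum c2 I2 \<le> 1"
  shows "z0 + (\<Sum>k\<in>I1. c1 k *\<^sub>R (z1 k - z0)) + (\<Sum>k\<in>I2. c2 k *\<^sub>R (z2 k - z0)) \<in> H"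
proof -
  define I where "I = Inl ` I1 \<union> Inr ` I2"
  define z where "z = case_sum z1 z2"
  define c where "c = case_sum c1 c2"
  have sI: "sum g I = (\<Sum>k\<in>I1. g (Inl k)) + (\<Sum>k\<in>I2. g (Inr k))" for g :: "'i + 'k \<Rightarrow> 'b::comm_monoid_add"
    unfolding I_def using H(3,4) by (subst sum.union_disjoint) (auto simp: sum.reindex)
  have sc: "sum c I \<le> 1" using sI[of c] H(9) by (simp add: c_def)
  have "z0 + (\<Sum>k\<in>I. c k *\<^sub>R (z k - z0)) \<in> H"
    by (rule convex_step[OF _ _ _ _ _ sc]) (use H in \<open>auto simp: I_def z_def c_def sI\<close>)
  then show ?thesis unfolding sI by (simp add: z_def c_def add.assoc)
qed



lemma dist_step:
  fixes X :: "'f::finite \<Rightarrow> 'a::euclidean_space" and Y :: "'l::finite \<Rightarrow> 'a"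
  assumes H_def: "H = convex hull (range Y)"
    and al: "\<And>j. \<alpha> j \<ge> 0" and be: "\<And>j. \<beta> j \<ge> 0" and h: "h \<ge> 0"
    and sm: "h * (sum \<alpha> (N - {l}) + sum \<beta> L) \<le> 1"
    and DM: "\<And>j. infdist (X j) H \<le> Dv"
  shows "infdist (X l + h *\<^sub>R ((\<Sum>j\<in>N. \<alpha> j *\<^sub>R (X j - X l)) + (\<Sum>j\<in>L. \<beta> j *\<^sub>R (Y j - X l)))) H
         \<le> infdist (X l) H + h * sum \<alpha> (N - {l}) * (Dv - infdist (X l) H)"
proof -
  have "\<forall>j. \<exists>qj. qj \<in> H \<and> infdist (X j) H = dist (X j) qj"
    using infdist_attains_inf[OF compact_imp_closed[OF hull_compact_ne(1)] hull_compact_ne(2)]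
    unfolding H_def by metis
  then obtain q where q: "\<And>j. q j \<in> H" "\<And>j. infdist (X j) H = dist (X j) (q j)" by metis
  define N' where "N' = N - {l}"
  define A where "A = sum \<alpha> N'"
  define B where "B = sum \<beta> L"
  have A0: "A \<ge> 0" using al by (simp add: A_def sum_nonneg)
  have B0: "B \<ge> 0" using be by (simp add: B_def sum_nonneg)
  have S1: "(\<Sum>j\<in>N. \<alpha> j *\<^sub>R (X j - X l)) = (\<Sum>j\<in>N'. \<alpha> j *\<^sub>R (X j - X l))"
  proof (cases "l \<in> N")
    case True then show ?thesis unfolding N'_def by (simp add: sum.remove)
  next
    case False then show ?thesis unfolding N'_def by simp
  qed
  define e where "e j = X j - q j" for j
  have ne: "norm (e j) = infdist (X j) H" for j using q(2) by (simp add: e_def dist_norm)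
  define Q where "Q = q l + (\<Sum>j\<in>N'. (h * \<alpha> j) *\<^sub>R (q j - q l)) + (\<Sum>j\<in>L. (h * \<beta> j) *\<^sub>R (Y j - q l))"
  have QH: "Q \<in> H" unfolding Q_def
  proof (rule convex_step2)
    show "convex H" unfolding H_def by simp
    show "sum (\<lambda>j. h * \<alpha> j) N' + sum (\<lambda>j. h * \<beta> j) L \<le> 1"
      using sm by (simp add: N'_def sum_distrib_left[symmetric] distrib_left)
  qed (use q al be h in \<open>auto simp: H_def intro: hull_inc\<close>)
  define P where "P = X l + h *\<^sub>R ((\<Sum>j\<in>N. \<alpha> j *\<^sub>R (X j - X l)) + (\<Sum>j\<in>L. \<beta> j *\<^sub>R (Y j - X l)))"
  have PQ: "P - Q = (1 - h * A - h * B) *\<^sub>R e l + (\<Sum>j\<in>N'. (h * \<alpha> j) *\<^sub>R e j)"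
  proof -
    have "P - Q = (X l - q l) + (\<Sum>j\<in>N'. (h * \<alpha> j) *\<^sub>R (e j - e l)) + (\<Sum>j\<in>L. (h * \<beta> j) *\<^sub>R (q l - X l))"
      unfolding P_def Q_def S1 e_def
      by (simp add: scaleR_add_right scaleR_sum_right scaleR_diff_right sum_subtractf sum.distrib algebra_simps)
    also have "\<dots> = (1 - h * A - h * B) *\<^sub>R e l + (\<Sum>j\<in>N'. (h * \<alpha> j) *\<^sub>R e j)"
      by (simp add: e_def A_def B_def scaleR_diff_right sum_subtractf scaleR_sum_left[symmetric]
          sum_distrib_left sum.distrib algebra_simps)
    finally show ?thesis .
  qed
  have c0: "1 - h * A - h * B \<ge> 0" using sm by (simp add: A_def B_def N'_def distrib_left)
  have "norm (P - Q) \<le> (1 - h * A - h * B) * norm (e l) + (\<Sum>j\<in>N'. (h * \<alpha> j) * norm (e j))"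
    unfolding PQ using c0 al h
    by (intro order_trans[OF norm_triangle_ineq] add_mono order_trans[OF norm_sum] sum_mono)
       (auto simp: abs_of_nonneg)
  also have "\<dots> \<le> (1 - h * A - h * B) * norm (e l) + (\<Sum>j\<in>N'. (h * \<alpha> j) * Dv)"
    using al h DM ne c0 by (intro add_mono sum_mono mult_left_mono) auto
  also have "\<dots> = (1 - h * A - h * B) * norm (e l) + h * A * Dv"
    by (simp add: A_def sum_distrib_right sum_distrib_left)
  also have "\<dots> \<le> infdist (X l) H + h * A * (Dv - infdist (X l) H)"
  proof -
    have "h * B * norm (e l) \<ge> 0" using h B0 by simp
    then show ?thesis unfolding ne by (simp add: algebra_simps)
  qed
  finally have "norm (P - Q) \<le> infdist (X l) H + h * A * (Dv - infdist (X l) H)" .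
  moreover have "infdist P H \<le> norm (P - Q)" using infdist_le[OF QH] by (simp add: dist_norm)
  ultimately show ?thesis unfolding P_def A_def N'_def by linarith
qed



locale L11 =
  fixes P :: "('f::finite, 'l::finite) digraph set"
    and \<sigma> :: "real \<Rightarrow> ('f, 'l) digraph"
    and a :: "'f \<Rightarrow> 'f \<Rightarrow> ('f \<Rightarrow> 'a::euclidean_space) \<Rightarrow> ('l \<Rightarrow> 'a) \<Rightarrow> real \<Rightarrow> real"
    and b :: "'f \<Rightarrow> 'l \<Rightarrow> ('f \<Rightarrow> 'a) \<Rightarrow> ('l \<Rightarrow> 'a) \<Rightarrow> real \<Rightarrow> real"
    and u :: "'l \<Rightarrow> ('l \<Rightarrow> 'a) \<Rightarrow> real \<Rightarrow> 'a"
    and w x :: "'f \<Rightarrow> real \<Rightarrow> 'a"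
    and y :: "'l \<Rightarrow> real \<Rightarrow> 'a"
    and tauD a_lo a_up b_lo t0 T :: real
  assumes data: "system5_data P tauD \<sigma> a b u w a_lo a_up b_lo"
    and traj: "system5_traj \<sigma> a b u w x y"
    and t0: "t0 \<ge> 0"
    and t0T: "t0 \<le> T"
begin

definition "J = {t0..T}"
definition "uy j s = u j (\<lambda>l. y l s) s" for j s
definition "zz s = z_norm u w y s" for s
definition "zu s = sqrt (\<Sum>j\<in>UNIV. (norm (uy j s))\<^sup>2)" for s

lemma a_bounds: "a_lo \<le> a i j X Y t" "a i j X Y t \<le> a_up" "0 < a_lo"
  using data by (auto simp: system5_data_def)
lemma b_bounds: "0 < b_lo" "b_lo \<le> b i j X Y t"
  using data by (auto simp: system5_data_def)
lemma w_cont: "continuous_on {0..} (w i)"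
  using data by (auto simp: system5_data_def)
lemma x_cont: "continuous_on {0..} (x i)" and y_cont: "continuous_on {0..} (y j)"
  using traj by (auto simp: system5_traj_def)

definition "S = (SOME S. countable S \<and>
        (\<forall>t\<in>{0..} - S.
           (\<forall>j. (y j has_vector_derivative u j (\<lambda>l. y l t) t) (at t within {0..})) \<and>
           (\<forall>i. (x i has_vector_derivative
                   follower_rhs \<sigma> a b w (\<lambda>l. x l t) (\<lambda>l. y l t) t i) (at t within {0..}))))"

lemma S_prop: "countable S"
  "\<And>t j. t \<in> {0..} - S \<Longrightarrow> (y j has_vector_derivative uy j t) (at t within {0..})"
  "\<And>t i. t \<in> {0..} - S \<Longrightarrow> (x i has_vector_derivative
                   follower_rhs \<sigma> a b w (\<lambda>l. x l t) (\<lambda>l. y l t) t i) (at t within {0..})"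
proof -
  have ex: "\<exists>S. countable S \<and>
        (\<forall>t\<in>{0..} - S.
           (\<forall>j. (y j has_vector_derivative u j (\<lambda>l. y l t) t) (at t within {0..})) \<and>
           (\<forall>i. (x i has_vector_derivative
                   follower_rhs \<sigma> a b w (\<lambda>l. x l t) (\<lambda>l. y l t) t i) (at t within {0..})))"
    using traj by (simp add: system5_traj_def)
  note sp = someI_ex[OF ex, folded S_def]
  show "countable S" using sp by blast
  show "\<And>t j. t \<in> {0..} - S \<Longrightarrow> (y j has_vector_derivative uy j t) (at t within {0..})"
    using sp by (simp add: uy_def)
  show "\<And>t i. t \<in> {0..} - S \<Longrightarrow> (x i has_vector_derivative
                   follower_rhs \<sigma> a b w (\<lambda>l. x l t) (\<lambda>l. y l t) t i) (at t within {0..})"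
    using sp by blast
qed

lemma uy_has_integral:
  assumes "0 \<le> p" "p \<le> q"
  shows "(uy j has_integral (y j q - y j p)) {p..q}"
proof (rule ftc_countable[OF assms(2) S_prop(1)])
  show "continuous_on {p..q} (y j)" by (rule continuous_on_subset[OF y_cont]) (use assms in auto)
  fix t assume "t \<in> {p..q} - S"
  then have "t \<in> {0..} - S" using assms by auto
  from S_prop(2)[OF this] show "(y j has_vector_derivative uy j t) (at t within {p..q})"
    by (rule has_vector_derivative_within_subset) (use assms in auto)
qed

lemma J_sets: "J \<in> sets lebesgue" by (simp add: J_def)

lemma uy_meas: "uy j \<in> borel_measurable (lebesgue_on J)"
proof -
  have "uy j integrable_on J" using uy_has_integral[OF t0 t0T] by (auto simp: J_def)
  then show ?thesis by (rule integrable_imp_measurable)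
qed

lemma w_meas: "w i \<in> borel_measurable (lebesgue_on J)"
  by (rule continuous_imp_measurable_on_sets_lebesgue[OF _ J_sets])
     (rule continuous_on_subset[OF w_cont], use t0 in \<open>auto simp: J_def\<close>)

lemma zz_meas: "zz \<in> borel_measurable (lebesgue_on J)"
proof -
  have "(\<lambda>s. sqrt ((\<Sum>j\<in>UNIV. (norm (uy j s))\<^sup>2) + (\<Sum>i\<in>UNIV. (norm (w i s))\<^sup>2))) \<in> borel_measurable (lebesgue_on J)"
    using uy_meas w_meas by measurable
  moreover have "zz = (\<lambda>s. sqrt ((\<Sum>j\<in>UNIV. (norm (uy j s))\<^sup>2) + (\<Sum>i\<in>UNIV. (norm (w i s))\<^sup>2)))"
    by (simp add: fun_eq_iff zz_def z_norm_def uy_def)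
  ultimately show ?thesis by simp
qed

lemma zu_meas: "zu \<in> borel_measurable (lebesgue_on J)"
  unfolding zu_def using uy_meas by measurable

lemma zz_nonneg: "zz s \<ge> 0" by (simp add: zz_def z_norm_def sum_nonneg add_nonneg_nonneg)
lemma zu_nonneg: "zu s \<ge> 0" by (simp add: zu_def sum_nonneg)

lemma zu_le_zz: "zu s \<le> zz s"
proof -
  have "(\<Sum>j\<in>UNIV. (norm (uy j s))\<^sup>2) \<le> (\<Sum>j\<in>UNIV. (norm (uy j s))\<^sup>2) + (\<Sum>i\<in>UNIV. (norm (w i s))\<^sup>2)"
    by (simp add: sum_nonneg)
  then show ?thesis unfolding zu_def zz_def z_norm_def uy_def by (rule real_sqrt_le_mono)
qed

lemma uy_le_zu: "norm (uy j s) \<le> zu s"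
proof -
  have "(norm (uy j s))\<^sup>2 \<le> (\<Sum>j\<in>UNIV. (norm (uy j s))\<^sup>2)"
    by (rule member_le_sum) auto
  then have "sqrt ((norm (uy j s))\<^sup>2) \<le> zu s" unfolding zu_def by (rule real_sqrt_le_mono)
  then show ?thesis by simp
qed

lemma wz_le: "norm (w i s) + zu s \<le> sqrt 2 * zz s"
proof -
  let ?a = "norm (w i s)" and ?b = "zu s"
  have a0: "?a \<ge> 0" and b0: "?b \<ge> 0" using zu_nonneg by auto
  have b2: "?b\<^sup>2 = (\<Sum>j\<in>UNIV. (norm (uy j s))\<^sup>2)" unfolding zu_def by (simp add: sum_nonneg)
  have a2: "?a\<^sup>2 \<le> (\<Sum>i\<in>UNIV. (norm (w i s))\<^sup>2)" by (rule member_le_sum) auto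
  have "(?a + ?b)\<^sup>2 = 2 * (?a\<^sup>2 + ?b\<^sup>2) - (?a - ?b)\<^sup>2"
    by (simp add: power2_eq_square algebra_simps)
  moreover have "0 \<le> (?a - ?b)\<^sup>2" by simp
  ultimately have "(?a + ?b)\<^sup>2 \<le> 2 * (?a\<^sup>2 + ?b\<^sup>2)" by linarith
  also have "\<dots> \<le> 2 * ((\<Sum>j\<in>UNIV. (norm (uy j s))\<^sup>2) + (\<Sum>i\<in>UNIV. (norm (w i s))\<^sup>2))"
    using a2 b2 by simp
  also have "\<dots> = (sqrt 2 * zz s)\<^sup>2"
    by (simp add: zz_def z_norm_def uy_def power_mult_distrib sum_nonneg)
  finally show ?thesis
    using a0 b0 zz_nonneg by (meson power2_le_imp_le real_sqrt_ge_zero mult_nonneg_nonneg zero_le_numeral)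
qed

lemma nn_eq: "(\<integral>\<^sup>+ s\<in>J. ennreal (zz s) \<partial>lborel) = nn_integral (lebesgue_on J) (\<lambda>s. ennreal (zz s))"
  using J_sets by (simp add: nn_integral_restrict_space nn_integral_completion)

end



context L11 begin

definition "H t = leader_hull y t" for t
definition "dd l t = infdist (x l t) (H t)" for l t
definition "DM t = dist_hull_max x y t" for t

lemma DM_eq: "DM t = Max (range (\<lambda>l. dd l t))"
  by (simp add: DM_def dist_hull_max_def dd_def H_def)

lemma dd_le_DM: "dd l t \<le> DM t" unfolding DM_eq by (rule Max_ge) auto

lemma dd_nonneg: "dd l t \<ge> 0" by (simp add: dd_def infdist_nonneg)

lemma H_eq: "H t = convex hull (range (\<lambda>j. y j t))" by (simp add: H_def leader_hull_def)

definition "gB t s = (\<Sum>l\<in>UNIV. norm (x l s - x l t)) + (\<Sum>j\<in>UNIV. norm (y j s - y j t))" for t s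

lemma dd_diff: "\<bar>dd l s - dd l t\<bar> \<le> gB t s"
proof -
  have yb: "\<And>j. norm (y j s - y j t) \<le> (\<Sum>j\<in>UNIV. norm (y j s - y j t))"
    by (rule member_le_sum) auto
  have xb: "norm (x l s - x l t) \<le> (\<Sum>l\<in>UNIV. norm (x l s - x l t))"
    by (rule member_le_sum) auto
  have h1: "infdist p (H s) \<le> infdist p (H t) + (\<Sum>j\<in>UNIV. norm (y j s - y j t))" for p
    unfolding H_eq by (rule hull_shift) (use yb in \<open>simp add: norm_minus_commute\<close>)
  have h2: "infdist p (H t) \<le> infdist p (H s) + (\<Sum>j\<in>UNIV. norm (y j s - y j t))" for p
    unfolding H_eq by (rule hull_shift) (use yb in simp)
  have i1: "infdist (x l s) (H t) \<le> infdist (x l t) (H t) + norm (x l s - x l t)"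
    using infdist_triangle[of "x l s" "H t" "x l t"] by (simp add: dist_norm)
  have i2: "infdist (x l t) (H s) \<le> infdist (x l s) (H s) + norm (x l s - x l t)"
    using infdist_triangle[of "x l t" "H s" "x l s"] by (simp add: dist_norm norm_minus_commute)
  show ?thesis unfolding dd_def gB_def
    using h1[of "x l s"] h2[of "x l t"] i1 i2 xb by (simp add: abs_le_iff)
qed

lemma DM_diff: "\<bar>DM s - DM t\<bar> \<le> gB t s"
proof -
  have a1: "DM s \<le> DM t + gB t s"
    unfolding DM_eq[of s] using dd_diff dd_le_DM by (simp add: Max_le_iff abs_le_iff) (smt (verit) DM_eq)
  have a2: "DM t \<le> DM s + gB t s"
    unfolding DM_eq[of t] using dd_diff dd_le_DM by (simp add: Max_le_iff abs_le_iff) (smt (verit) DM_eq)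
  show ?thesis using a1 a2 by linarith
qed

lemma cont_by_bound:
  fixes f g :: "real \<Rightarrow> real"
  assumes "\<And>s. s \<in> A \<Longrightarrow> \<bar>f s - f t\<bar> \<le> g s" "continuous (at t within A) g" "g t = 0"
  shows "continuous (at t within A) f"
proof -
  have g0: "(g \<longlongrightarrow> 0) (at t within A)" using assms(2,3) by (simp add: continuous_within)
  have ev: "\<forall>\<^sub>F s in at t within A. norm (f s - f t) \<le> g s"
    using assms(1) by (auto simp: eventually_at_filter)
  have "((\<lambda>s. f s - f t) \<longlongrightarrow> 0) (at t within A)" by (rule Lim_null_comparison[OF ev g0])
  then show ?thesis unfolding continuous_within by (rule LIM_zero_cancel)
qed

lemma gB_cont: "t \<in> {0..} \<Longrightarrow> continuous (at t within {0..}) (gB t)"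
  unfolding gB_def
  using x_cont y_cont
  by (intro continuous_intros) (auto simp: continuous_on_eq_continuous_within)

lemma dd_cont: "continuous_on {0..} (dd l)"
  unfolding continuous_on_eq_continuous_within
proof
  fix t :: real assume t: "t \<in> {0..}"
  show "continuous (at t within {0..}) (dd l)"
    by (rule cont_by_bound[OF _ gB_cont[OF t]], rule dd_diff, simp add: gB_def)
qed

lemma DM_cont: "continuous_on {0..} DM"
  unfolding continuous_on_eq_continuous_within
proof
  fix t :: real assume t: "t \<in> {0..}"
  show "continuous (at t within {0..}) DM"
    by (rule cont_by_bound[OF _ gB_cont[OF t]], rule DM_diff, simp add: gB_def)
qed

end

locale L11f = L11 +
  assumes fin: "(\<integral>\<^sup>+ s\<in>J. ennreal (zz s) \<partial>lborel) < \<infinity>"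
begin

lemma zz_int: "integrable (lebesgue_on J) zz"
  by (rule integrableI_nonneg[OF zz_meas]) (use fin nn_eq zz_nonneg in auto)

definition "R = integral\<^sup>L (lebesgue_on J) zz"

lemma zz_hasint: "(zz has_integral R) J"
  unfolding R_def by (rule has_integral_integral_lebesgue_on[OF zz_int J_sets])

lemma nn_R: "(\<integral>\<^sup>+ s\<in>J. ennreal (zz s) \<partial>lborel) = ennreal R"
  unfolding nn_eq R_def by (rule nn_integral_eq_integral[OF zz_int]) (simp add: zz_nonneg)

lemma zz_intJ: "zz integrable_on J" using zz_hasint by blast

lemma zu_intJ: "zu integrable_on J"
proof -
  have "integrable (lebesgue_on J) zu"
    by (rule Bochner_Integration.integrable_bound[OF zz_int zu_meas]) (simp add: zu_nonneg zz_nonneg zu_le_zz)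
  then show ?thesis by (rule integrable_on_lebesgue_on[OF _ J_sets])
qed

lemma wn_intJ: "(\<lambda>s. norm (w i s)) integrable_on J"
  unfolding J_def
  by (rule integrable_continuous_real)
     (rule continuous_on_norm, rule continuous_on_subset[OF w_cont], use t0 in auto)

definition "G t = sqrt 2 * integral {t0..t} zz" for t

lemma G_cont: "continuous_on J G"
  unfolding G_def J_def
  by (intro continuous_intros indefinite_integral_continuous_1) (use zz_intJ in \<open>simp add: J_def\<close>)

lemma sub_int: fixes f :: "real \<Rightarrow> real" shows "f integrable_on J \<Longrightarrow> t0 \<le> p \<Longrightarrow> q \<le> T \<Longrightarrow> f integrable_on {p..q}"
  by (rule integrable_on_subinterval) (auto simp: J_def)

lemma G_diff: assumes "t0 \<le> t" "t \<le> s" "s \<le> T"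
  shows "G s - G t = sqrt 2 * integral {t..s} zz"
proof -
  have "integral {t0..t} zz + integral {t..s} zz = integral {t0..s} zz"
    by (rule Henstock_Kurzweil_Integration.integral_combine) (use assms sub_int[OF zz_intJ] in auto)
  then have "integral {t0..s} zz = integral {t0..t} zz + integral {t..s} zz" by simp
  then show ?thesis unfolding G_def by (simp add: algebra_simps)
qed

lemma int_zz_nonneg: "t0 \<le> p \<Longrightarrow> q \<le> T \<Longrightarrow> integral {p..q} zz \<ge> 0"
  by (rule integral_nonneg) (auto simp: zz_nonneg intro: sub_int[OF zz_intJ])

lemma G_mono: "t0 \<le> t \<Longrightarrow> t \<le> s \<Longrightarrow> s \<le> T \<Longrightarrow> G t \<le> G s"
proof -
  assume a: "t0 \<le> t" "t \<le> s" "s \<le> T"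
  have "0 \<le> sqrt 2 * integral {t..s} zz" using int_zz_nonneg[of t s] a by simp
  then show ?thesis using G_diff[OF a] by linarith
qed

lemma G_t0: "G t0 = 0" by (simp add: G_def)

lemma G_T: "G T = sqrt 2 * R"
  using zz_hasint unfolding G_def J_def by (simp add: integral_unique)

end



context L11 begin

definition "kk = (real CARD('f) - 1) * a_up"

lemma kk_nonneg: "kk \<ge> 0"
proof -
  have "real CARD('f) \<ge> 1" using card_ge_0_finite[of "UNIV :: 'f set"] by simp
  moreover have "a_up \<ge> 0" using a_bounds(1)[of undefined undefined undefined undefined undefined]
    a_bounds(2)[of undefined undefined undefined undefined undefined] a_bounds(3) by linarith
  ultimately show ?thesis by (simp add: kk_def)
qed

lemma sum_a_le_kk: "sum (\<lambda>j. a l j X Y t) (N - {l}) \<le> kk"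
proof -
  have "sum (\<lambda>j. a l j X Y t) (N - {l}) \<le> sum (\<lambda>j. a_up) (N - {l})"
    by (rule sum_mono) (rule a_bounds(2))
  also have "\<dots> = real (card (N - {l})) * a_up" by simp
  also have "\<dots> \<le> real (CARD('f) - 1) * a_up"
  proof -
    have "card (N - {l}) \<le> card (UNIV - {l} :: 'f set)" by (rule card_mono) auto
    also have "\<dots> = CARD('f) - 1" by (simp add: card_Diff_singleton)
    finally have "real (card (N - {l})) \<le> real (CARD('f) - 1)" by (rule of_nat_mono)
    moreover have "a_up \<ge> 0" using a_bounds(1)[of l l X Y t] a_bounds(2)[of l l X Y t] a_bounds(3) by linarith
    ultimately show ?thesis by (rule mult_right_mono)
  qed
  also have "\<dots> = kk"
  proof -
    have "CARD('f) \<ge> 1" using card_ge_0_finite[of "UNIV :: 'f set"] by simp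
    then show ?thesis by (simp add: kk_def of_nat_diff)
  qed
  finally show ?thesis .
qed

end



context L11f begin

lemma local_core:
  assumes t: "t \<in> {t0..<T} - S" and e: "e > 0"
  shows "\<exists>\<delta>>0. \<forall>s. t < s \<and> s < t + \<delta> \<and> s \<le> T \<longrightarrow> (s - t) * kk \<le> 1 \<and>
          (\<forall>l. dd l s \<le> dd l t + (s - t) * kk * (DM t - dd l t) + (G s - G t) + e * (s - t))"
proof -
  have t0t: "t0 \<le> t" "t < T" "t \<notin> S" using t by auto
  have tnn: "t \<ge> 0" using t0 t0t by simp
  define X where "X = (\<lambda>l. x l t)"
  define Y where "Y = (\<lambda>l. y l t)"
  define Nl where "Nl l = {j. (Inl j, Inl l) \<in> \<sigma> t}" for l
  define Ll where "Ll l = {j. (Inr j, Inl l) \<in> \<sigma> t}" for l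
  define \<alpha> where "\<alpha> l j = a l j X Y t" for l j
  define \<beta> where "\<beta> l j = b l j X Y t" for l j
  define v where "v l = follower_rhs \<sigma> a b w X Y t l" for l
  have v_eq: "v l = (\<Sum>j\<in>Nl l. \<alpha> l j *\<^sub>R (X j - X l)) + (\<Sum>j\<in>Ll l. \<beta> l j *\<^sub>R (Y j - X l)) + w l t" for l
    by (simp add: v_def follower_rhs_def Nl_def Ll_def \<alpha>_def \<beta>_def)
  have al0: "\<alpha> l j \<ge> 0" for l j using a_bounds(1)[of l j X Y t] a_bounds(3) by (simp add: \<alpha>_def)
  have be0: "\<beta> l j \<ge> 0" for l j using b_bounds(2)[of l j X Y t] b_bounds(1) by (simp add: \<beta>_def)
  define cl where "cl l = sum (\<alpha> l) (Nl l - {l}) + sum (\<beta> l) (Ll l) + kk + 1" for l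
  have clpos: "cl l \<ge> kk + 1" for l using al0 be0 by (simp add: cl_def sum_nonneg)
  have kk0: "kk \<ge> 0" by (rule kk_nonneg)
  define e3 where "e3 = e / 3"
  have e3: "e3 > 0" using e by (simp add: e3_def)
  have ev: "\<forall>\<^sub>F s in at_right t.
     norm (x l s - x l t - (s - t) *\<^sub>R v l) \<le> e3 * (s - t) \<and>
     (\<forall>r\<in>{t..s}. norm (w l r - w l t) \<le> e3) \<and> (s - t) * cl l < 1" for l
  proof -
    have "(x l has_vector_derivative v l) (at t within {0..})"
      using S_prop(3)[of t l] tnn t0t by (simp add: v_def X_def Y_def)
    then obtain d1 where d1: "d1 > 0" "\<forall>s\<in>{0..}. norm (s - t) < d1 \<longrightarrow>
        norm (x l s - x l t - (s - t) *\<^sub>R v l) \<le> e3 * norm (s - t)"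
      using e3 unfolding has_vector_derivative_def has_derivative_within_alt by blast
    obtain d2 where d2: "d2 > 0" "\<forall>r\<in>{0..}. dist r t < d2 \<longrightarrow> dist (w l r) (w l t) < e3"
      using w_cont[of l] tnn e3 unfolding continuous_on_iff by (metis atLeast_iff)
    have clp: "cl l > 0" using clpos[of l] kk0 by linarith
    define b0 where "b0 = t + min (min d1 d2) (1 / cl l)"
    have "b0 > t" using d1 d2 clp by (simp add: b0_def)
    moreover have "norm (x l s - x l t - (s - t) *\<^sub>R v l) \<le> e3 * (s - t) \<and>
     (\<forall>r\<in>{t..s}. norm (w l r - w l t) \<le> e3) \<and> (s - t) * cl l < 1" if "s > t" "s < b0" for s
    proof (intro conjI)
      show "norm (x l s - x l t - (s - t) *\<^sub>R v l) \<le> e3 * (s - t)"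
        using d1(2)[rule_format, of s] that tnn by (simp add: b0_def)
      show "\<forall>r\<in>{t..s}. norm (w l r - w l t) \<le> e3"
      proof
        fix r assume "r \<in> {t..s}"
        then have "r \<in> {0..}" "dist r t < d2" using that tnn by (auto simp: b0_def dist_real_def)
        then show "norm (w l r - w l t) \<le> e3" using d2(2) by (auto simp: dist_norm less_imp_le)
      qed
      have "s - t < 1 / cl l" using that by (simp add: b0_def)
      then show "(s - t) * cl l < 1" using clp by (simp add: pos_less_divide_eq)
    qed
    ultimately show ?thesis unfolding eventually_at_right_field by blast
  qed
  have "\<forall>\<^sub>F s in at_right t. \<forall>l.
     norm (x l s - x l t - (s - t) *\<^sub>R v l) \<le> e3 * (s - t) \<and>
     (\<forall>r\<in>{t..s}. norm (w l r - w l t) \<le> e3) \<and> (s - t) * cl l < 1"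
    by (rule eventually_all_finite) (rule ev)
  then obtain b0 where b0: "b0 > t" "\<And>s l. s > t \<Longrightarrow> s < b0 \<Longrightarrow>
     norm (x l s - x l t - (s - t) *\<^sub>R v l) \<le> e3 * (s - t) \<and>
     (\<forall>r\<in>{t..s}. norm (w l r - w l t) \<le> e3) \<and> (s - t) * cl l < 1"
    unfolding eventually_at_right_field by blast
  show ?thesis
  proof (intro exI[of _ "b0 - t"] conjI allI impI)
    show "b0 - t > 0" using b0 by simp
    fix s assume s: "t < s \<and> s < t + (b0 - t) \<and> s \<le> T"
    then have st: "t < s" "s < b0" "s \<le> T" by auto
    define h where "h = s - t"
    have h0: "h > 0" using st by (simp add: h_def)
    have B: "\<And>l. norm (x l s - x l t - h *\<^sub>R v l) \<le> e3 * h \<and>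
     (\<forall>r\<in>{t..s}. norm (w l r - w l t) \<le> e3) \<and> h * cl l < 1"
      using b0(2)[OF st(1,2)] by (simp add: h_def)
    show "(s - t) * kk \<le> 1"
    proof -
      have "h * kk \<le> h * cl undefined" using clpos[of undefined] h0 by simp
      then show ?thesis using B[of undefined] by (simp add: h_def)
    qed
    fix l
    have intzu: "zu integrable_on {t..s}" by (rule sub_int[OF zu_intJ]) (use t0t st in auto)
    have ymove: "norm (Y j - y j s) \<le> integral {t..s} zu" for j
    proof -
      have "(uy j has_integral (y j s - y j t)) {t..s}" by (rule uy_has_integral) (use tnn st in auto)
      then have ui: "uy j integrable_on {t..s}" "integral {t..s} (uy j) = y j s - y j t"
        by (auto simp: integral_unique)
      have "norm (integral {t..s} (uy j)) \<le> integral {t..s} zu"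
        by (rule Henstock_Kurzweil_Integration.integral_norm_bound_integral[OF ui(1) intzu])
           (rule uy_le_zu)
      then show ?thesis using ui(2) by (simp add: Y_def norm_minus_commute)
    qed
    have step4: "dd l s \<le> infdist (x l s) (H t) + integral {t..s} zu"
      unfolding dd_def H_eq using hull_shift[of "\<lambda>j. y j t" "\<lambda>j. y j s" "integral {t..s} zu" "x l s"]
        ymove by (simp add: Y_def)
    define Pp where "Pp = X l + h *\<^sub>R ((\<Sum>j\<in>Nl l. \<alpha> l j *\<^sub>R (X j - X l)) + (\<Sum>j\<in>Ll l. \<beta> l j *\<^sub>R (Y j - X l)))"
    have step1: "infdist Pp (H t) \<le> dd l t + h * sum (\<alpha> l) (Nl l - {l}) * (DM t - dd l t)"
    proof -
      have "infdist Pp (H t) \<le> infdist (X l) (H t) + h * sum (\<alpha> l) (Nl l - {l}) * (DM t - infdist (X l) (H t))"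
      proof -
      have HY: "H t = convex hull (range Y)" by (simp add: H_eq Y_def)
      show ?thesis unfolding Pp_def
      proof (rule dist_step[OF HY])
        show "\<And>j. 0 \<le> \<alpha> l j" by (rule al0)
        show "\<And>j. 0 \<le> \<beta> l j" by (rule be0)
        show "0 \<le> h" using h0 by simp
        show "h * (sum (\<alpha> l) (Nl l - {l}) + sum (\<beta> l) (Ll l)) \<le> 1"
        proof -
          have hk: "0 \<le> h * kk" using h0 kk0 by simp
          have "h * cl l = h * (sum (\<alpha> l) (Nl l - {l}) + sum (\<beta> l) (Ll l)) + h * kk + h"
            by (simp add: cl_def algebra_simps)
          then show ?thesis using B[of l] hk h0 by linarith
        qed
        show "\<And>j. infdist (X j) (H t) \<le> DM t" using dd_le_DM by (simp add: dd_def X_def)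
      qed
    qed
    then show ?thesis by (simp add: dd_def X_def)
    qed
    have step2: "h * sum (\<alpha> l) (Nl l - {l}) * (DM t - dd l t) \<le> h * kk * (DM t - dd l t)"
    proof -
      have "sum (\<alpha> l) (Nl l - {l}) \<le> kk" unfolding \<alpha>_def by (rule sum_a_le_kk)
      moreover have "DM t - dd l t \<ge> 0" using dd_le_DM by simp
      ultimately show ?thesis using h0 by (intro mult_right_mono mult_left_mono) auto
    qed
    have step3: "infdist (x l s) (H t) \<le> infdist Pp (H t) + h * norm (w l t) + e3 * h"
    proof -
      have "x l s - Pp = (x l s - x l t - h *\<^sub>R v l) + h *\<^sub>R w l t"
        unfolding Pp_def v_eq by (simp add: X_def algebra_simps)
      then have "norm (x l s - Pp) \<le> norm (x l s - x l t - h *\<^sub>R v l) + h * norm (w l t)"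
        using h0 by (metis abs_of_pos norm_scaleR norm_triangle_ineq)
      also have "\<dots> \<le> e3 * h + h * norm (w l t)" using B[of l] by simp
      finally have "dist (x l s) Pp \<le> h * norm (w l t) + e3 * h" by (simp add: dist_norm)
      then show ?thesis using infdist_triangle[of "x l s" "H t" Pp] by linarith
    qed
    have intw: "(\<lambda>r. norm (w l r)) integrable_on {t..s}" by (rule sub_int[OF wn_intJ]) (use t0t st in auto)
    have step5: "h * norm (w l t) \<le> integral {t..s} (\<lambda>r. norm (w l r)) + e3 * h"
    proof -
      have "integral {t..s} (\<lambda>r. norm (w l t) - e3) \<le> integral {t..s} (\<lambda>r. norm (w l r))"
      proof (rule integral_le[OF _ intw])
        show "(\<lambda>r. norm (w l t) - e3) integrable_on {t..s}" by (rule integrable_const_ivl)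
        fix r assume "r \<in> {t..s}"
        then have "norm (w l r - w l t) \<le> e3" using B[of l] by blast
        then show "norm (w l t) - e3 \<le> norm (w l r)" by (metis norm_triangle_ineq2 diff_le_eq add.commute order_trans norm_minus_commute)
      qed
      moreover have "integral {t..s} (\<lambda>r. norm (w l t) - e3) = h * (norm (w l t) - e3)"
        using st by (simp add: h_def)
      ultimately show ?thesis by (simp add: algebra_simps)
    qed
    have intz: "zz integrable_on {t..s}" by (rule sub_int[OF zz_intJ]) (use t0t st in auto)
    have step6: "integral {t..s} (\<lambda>r. norm (w l r)) + integral {t..s} zu \<le> G s - G t"
    proof -
      have "integral {t..s} (\<lambda>r. norm (w l r)) + integral {t..s} zu = integral {t..s} (\<lambda>r. norm (w l r) + zu r)"
        by (rule integral_add[OF intw intzu, symmetric])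
      also have "\<dots> \<le> integral {t..s} (\<lambda>r. sqrt 2 * zz r)"
        by (rule integral_le) (use intw intzu intz wz_le in \<open>auto intro: integrable_add integrable_cmul\<close>)
      also have "\<dots> = sqrt 2 * integral {t..s} zz" by simp
      also have "\<dots> = G s - G t" using G_diff[of t s] t0t st by simp
      finally show ?thesis .
    qed
    have ee: "e3 * h + e3 * h \<le> e * h" using e h0 by (simp add: e3_def field_simps)
    have "dd l s \<le> dd l t + h * kk * (DM t - dd l t) + (G s - G t) + e * h"
      using ee step1 step2 step3 step4 step5 step6 by linarith
    then show "dd l s \<le> dd l t + (s - t) * kk * (DM t - dd l t) + (G s - G t) + e * (s - t)"
      by (simp add: h_def)
  qed
qed

end



context L11f begin

lemma DM_contJ: "continuous_on {p..q} DM" if "t0 \<le> p" for p q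
  by (rule continuous_on_subset[OF DM_cont]) (use that t0 in auto)
lemma dd_contJ: "continuous_on {p..q} (dd l)" if "t0 \<le> p" for p q
  by (rule continuous_on_subset[OF dd_cont]) (use that t0 in auto)
lemma G_contJ: "continuous_on {p..q} G" if "t0 \<le> p" "q \<le> T" for p q
  by (rule continuous_on_subset[OF G_cont]) (use that in \<open>auto simp: J_def\<close>)

lemma claimA: assumes "t0 \<le> t" "t \<le> T" shows "DM t \<le> DM t0 + G t"
proof -
  let ?F = "\<lambda>t. DM t - G t"
  have "?F t \<le> ?F t0"
  proof (rule dini_mono'[OF _ S_prop(1) _ assms])
    show "continuous_on {t0..T} ?F"
      by (intro continuous_intros DM_contJ G_contJ) auto
    fix t e :: real assume t: "t \<in> {t0..<T} - S" and e: "e > 0"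
    obtain \<delta> where \<delta>: "\<delta> > 0" "\<forall>s. t < s \<and> s < t + \<delta> \<and> s \<le> T \<longrightarrow> (s - t) * kk \<le> 1 \<and>
          (\<forall>l. dd l s \<le> dd l t + (s - t) * kk * (DM t - dd l t) + (G s - G t) + e * (s - t))"
      using local_core[OF t e] by blast
    show "\<exists>\<delta>>0. \<forall>s. t < s \<and> s < t + \<delta> \<and> s \<le> T \<longrightarrow> ?F s \<le> ?F t + e * (s - t)"
    proof (intro exI[of _ \<delta>] conjI allI impI)
      show "\<delta> > 0" by fact
      fix s assume s: "t < s \<and> s < t + \<delta> \<and> s \<le> T"
      have hk: "(s - t) * kk \<le> 1" using \<delta>(2) s by blast
      have "dd l s \<le> DM t + (G s - G t) + e * (s - t)" for l
      proof -
        have "dd l s \<le> dd l t + (s - t) * kk * (DM t - dd l t) + (G s - G t) + e * (s - t)"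
          using \<delta>(2) s by blast
        moreover have "(1 - (s - t) * kk) * (DM t - dd l t) \<ge> 0"
          using hk dd_le_DM[of l t] by simp
        ultimately show ?thesis by (simp add: algebra_simps)
      qed
      then have "DM s \<le> DM t + (G s - G t) + e * (s - t)"
        unfolding DM_eq[of s] by (simp add: Max_le_iff)
      then show "?F s \<le> ?F t + e * (s - t)" by simp
    qed
  qed
  then show ?thesis using G_t0 by simp
qed

lemma claimB:
  assumes t1: "t0 \<le> t1" "t1 \<le> T" and tt: "t1 \<le> t" "t \<le> T"
  shows "(dd i t - (G t - G t1) - (DM t0 + G T)) * exp (kk * (t - t1)) \<le> dd i t1 - (DM t0 + G T)"
proof -
  define M where "M = DM t0 + G T"
  define v where "v t = dd i t - (G t - G t1)" for t
  define W where "W t = (v t - M) * exp (kk * (t - t1))" for t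
  have kk0: "kk \<ge> 0" by (rule kk_nonneg)
  have "W t \<le> W t1"
  proof (rule dini_mono'[OF _ S_prop(1) _ tt])
    show "continuous_on {t1..T} W" unfolding W_def v_def
      by (intro continuous_intros dd_contJ G_contJ) (use t1 in auto)
    fix t e :: real assume t: "t \<in> {t1..<T} - S" and e: "e > 0"
    have tA: "t \<in> {t0..<T} - S" using t t1 by auto
    define Et where "Et = exp (kk * (t - t1))"
    have Et: "Et > 0" by (simp add: Et_def)
    define m where "m = M - v t"
    have vdd: "v t \<le> dd i t" using G_mono[of t1 t] t t1 by (simp add: v_def)
    have DMM: "DM t \<le> M" using claimA[of t] G_mono[of t T] t t1 by (simp add: M_def)
    have m0: "m \<ge> 0" using vdd DMM dd_le_DM[of i t] by (simp add: m_def)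
    have Dm: "DM t - dd i t \<le> m" using vdd DMM by (simp add: m_def)
    define e' where "e' = e / (6 * Et)"
    have e': "e' > 0" using e Et by (simp add: e'_def)
    obtain \<delta>1 where \<delta>1: "\<delta>1 > 0" "\<forall>s. t < s \<and> s < t + \<delta>1 \<and> s \<le> T \<longrightarrow> (s - t) * kk \<le> 1 \<and>
          (\<forall>l. dd l s \<le> dd l t + (s - t) * kk * (DM t - dd l t) + (G s - G t) + e' * (s - t))"
      using local_core[OF tA e'] by blast
    define c where "c = m * Et * kk\<^sup>2"
    have c0: "c \<ge> 0" using m0 Et by (simp add: c_def)
    define \<delta> where "\<delta> = min \<delta>1 (e / (2 * (c + 1)))"
    have \<delta>: "\<delta> > 0" using \<delta>1 e c0 by (simp add: \<delta>_def)
    show "\<exists>\<delta>>0. \<forall>s. t < s \<and> s < t + \<delta> \<and> s \<le> T \<longrightarrow> W s \<le> W t + e * (s - t)"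
    proof (intro exI[of _ \<delta>] conjI allI impI)
      show "\<delta> > 0" by fact
      fix s assume s: "t < s \<and> s < t + \<delta> \<and> s \<le> T"
      define h where "h = s - t"
      have h0: "h > 0" using s by (simp add: h_def)
      have s1: "t < s" "s < t + \<delta>1" "s \<le> T" using s by (auto simp: \<delta>_def)
      have hk: "h * kk \<le> 1" using \<delta>1(2) s1 by (simp add: h_def)
      have hk0: "h * kk \<ge> 0" using h0 kk0 by simp
      have hc: "h * (c + 1) \<le> e / 2"
      proof -
        have "s < t + e / (2 * (c + 1))" using s unfolding \<delta>_def by linarith
        then have "h < e / (2 * (c + 1))" by (simp add: h_def)
        then show ?thesis using c0 by (simp add: pos_less_divide_eq field_simps)
      qed
      have dds: "dd i s \<le> dd i t + h * kk * (DM t - dd i t) + (G s - G t) + e' * h"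
        using \<delta>1(2) s1 by (simp add: h_def)
      have "h * kk * (DM t - dd i t) \<le> h * kk * m" using Dm hk0 by (rule mult_left_mono)
      then have vs: "v s - M \<le> - m * (1 - h * kk) + e' * h"
        using dds by (simp add: v_def m_def algebra_simps)
      define q where "q = exp (kk * h)"
      have q1: "1 + kk * h \<le> q" by (simp add: q_def exp_ge_add_one_self)
      have q3: "q \<le> 3"
      proof -
        have "q \<le> exp 1" unfolding q_def using hk by (simp add: mult.commute)
        then show ?thesis using exp_le by linarith
      qed
      have qpos: "q > 0" by (simp add: q_def)
      have Es: "exp (kk * (s - t1)) = Et * q"
        by (simp add: Et_def q_def h_def exp_add[symmetric] algebra_simps)
      have "W s = (v s - M) * (Et * q)" by (simp add: W_def Es)
      also have "\<dots> \<le> (- m * (1 - h * kk) + e' * h) * (Et * q)"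
        using vs Et qpos by (intro mult_right_mono) auto
      also have "\<dots> = - (m * Et) * ((1 - h * kk) * q) + (e' * Et) * (h * q)"
        by (simp add: algebra_simps)
      also have "\<dots> \<le> - (m * Et) * (1 - (h * kk)\<^sup>2) + (e / 6) * (h * 3)"
      proof (rule add_mono)
        have "(1 - h * kk) * (1 + kk * h) \<le> (1 - h * kk) * q"
          using q1 hk by (intro mult_left_mono) auto
        then have "1 - (h * kk)\<^sup>2 \<le> (1 - h * kk) * q" by (simp add: power2_eq_square algebra_simps)
        moreover have "m * Et \<ge> 0" using m0 Et by simp
        ultimately show "- (m * Et) * ((1 - h * kk) * q) \<le> - (m * Et) * (1 - (h * kk)\<^sup>2)"
          by (simp add: mult_left_mono)
        have "e' * Et = e / 6" using Et by (simp add: e'_def)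
        moreover have "h * q \<le> h * 3" using q3 h0 by simp
        ultimately show "(e' * Et) * (h * q) \<le> (e / 6) * (h * 3)"
          using e by (metis mult_left_mono less_eq_real_def divide_pos_pos zero_less_numeral)
      qed
      also have "\<dots> = W t + h * (h * c) + e / 2 * h"
        by (simp add: W_def m_def Et_def c_def power2_eq_square algebra_simps)
      also have "\<dots> \<le> W t + h * (e / 2) + e / 2 * h"
      proof -
        have "h * c \<le> e / 2" using hc h0 by (simp add: algebra_simps)
        then have "h * (h * c) \<le> h * (e / 2)" using h0 by (intro mult_left_mono) auto
        then show ?thesis by linarith
      qed
      also have "\<dots> = W t + e * (s - t)" by (simp add: h_def algebra_simps)
      finally show "W s \<le> W t + e * (s - t)" .
    qed
  qed
  then show ?thesis by (simp add: W_def v_def M_def)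
qed

lemma final_bound:
  assumes t1: "t0 \<le> t1" "t1 \<le> T" and tt: "t1 \<le> t" "t \<le> T"
    and eps0: "0 < eps0" "eps0 < 1" and c0: "c0 > 0"
    and start: "dd i t1 \<le> eps0 * DM t0 + c0"
  shows "dd i t \<le> (1 - exp (- (kk * (t - t1))) * (1 - eps0)) * DM t0 + c0 + 2 * G T"
proof -
  define M where "M = DM t0 + G T"
  define E where "E = exp (- (kk * (t - t1)))"
  have kk0: "kk \<ge> 0" by (rule kk_nonneg)
  have E0: "E > 0" by (simp add: E_def)
  have E1: "E \<le> 1" using kk0 tt by (simp add: E_def)
  have B: "(dd i t - (G t - G t1) - M) * exp (kk * (t - t1)) \<le> dd i t1 - M"
    using claimB[OF t1 tt] by (simp add: M_def)
  have "(dd i t - (G t - G t1) - M) * exp (kk * (t - t1)) * E \<le> (dd i t1 - M) * E"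
    using B E0 by (intro mult_right_mono) auto
  moreover have "exp (kk * (t - t1)) * E = 1" by (simp add: E_def exp_minus[symmetric] exp_add[symmetric])
  ultimately have "dd i t - (G t - G t1) - M \<le> (dd i t1 - M) * E" by (simp add: mult.assoc)
  then have d1: "dd i t \<le> M * (1 - E) + dd i t1 * E + G t - G t1" by (simp add: algebra_simps)
  have D0: "DM t0 \<ge> 0" using dd_le_DM[of i t0] dd_nonneg[of i t0] by linarith
  have Gt: "G t \<le> G T" using G_mono[of t T] tt t1 by simp
  have Gt1: "G t1 \<ge> 0" using G_mono[of t0 t1] t1 G_t0 by simp
  have GT: "G T \<ge> 0" using G_mono[of t0 T] t1 G_t0 by simp
  have a1: "dd i t1 * E \<le> (eps0 * DM t0 + c0) * E" using start E0 by (intro mult_right_mono) auto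
  have a2: "c0 * E \<le> c0" using c0 E1 by simp
  have a3: "G T * (1 - E) \<le> G T" using GT E0 by (simp add: algebra_simps)
  have "M * (1 - E) + (eps0 * DM t0 + c0) * E = (1 - E * (1 - eps0)) * DM t0 + G T * (1 - E) + c0 * E"
    by (simp add: M_def algebra_simps)
  then show ?thesis using d1 a1 a2 a3 Gt Gt1 unfolding E_def by linarith
qed

end



theorem lemma11:
  fixes P :: "('f::finite, 'l::finite) digraph set"
    and \<sigma> :: "real \<Rightarrow> ('f, 'l) digraph"
    and a :: "'f \<Rightarrow> 'f \<Rightarrow> ('f \<Rightarrow> 'a::euclidean_space) \<Rightarrow> ('l \<Rightarrow> 'a) \<Rightarrow> real \<Rightarrow> real"
    and b :: "'f \<Rightarrow> 'l \<Rightarrow> ('f \<Rightarrow> 'a) \<Rightarrow> ('l \<Rightarrow> 'a) \<Rightarrow> real \<Rightarrow> real"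
    and u :: "'l \<Rightarrow> ('l \<Rightarrow> 'a) \<Rightarrow> real \<Rightarrow> 'a"
    and w x :: "'f \<Rightarrow> real \<Rightarrow> 'a"
    and y :: "'l \<Rightarrow> real \<Rightarrow> 'a"
    and tauD a_lo a_up b_lo That eps0 t0 c0 t1 :: real
    and i :: 'f
  assumes n2: "CARD('f) \<ge> 2"
    and data: "system5_data P tauD \<sigma> a b u w a_lo a_up b_lo"
    and traj: "system5_traj \<sigma> a b u w x y"
    and That: "That > 0"
    and eps0: "0 < eps0" "eps0 < 1"
    and t0: "t0 \<ge> 0"
    and c0: "c0 > 0"
    and t1: "t1 \<ge> t0"
    and start: "infdist (x i t1) (leader_hull y t1) \<le> eps0 * dist_hull_max x y t0 + c0"
  shows "\<forall>t\<in>{t1..t1 + That}.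
           ennreal (infdist (x i t) (leader_hull y t))
             \<le> ennreal (phi_eps CARD('f) a_up eps0 (t - t1) * dist_hull_max x y t0 + c0)
                + ennreal (2 * sqrt 2) *
                  (\<integral>\<^sup>+ s\<in>{t0..t1 + That}. ennreal (z_norm u w y s) \<partial>lborel)"
proof
  fix t assume t: "t \<in> {t1..t1 + That}"
  define T where "T = t1 + That"
  interpret L: L11 P \<sigma> a b u w x y tauD a_lo a_up b_lo t0 T
    using data traj t0 t1 That by unfold_locales (auto simp: T_def)
  have ddeq: "infdist (x i s) (leader_hull y s) = L.dd i s" for s
    by (simp add: L.dd_def L.H_def)
  have DMeq: "dist_hull_max x y t0 = L.DM t0" by (simp add: L.DM_def)
  have nneq: "(\<integral>\<^sup>+ s\<in>{t0..t1 + That}. ennreal (z_norm u w y s) \<partial>lborel) = (\<integral>\<^sup>+ s\<in>L.J. ennreal (L.zz s) \<partial>lborel)"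
    unfolding L.J_def L.zz_def by (simp add: T_def)
  have phieq: "phi_eps CARD('f) a_up eps0 (t - t1) = 1 - exp (- (L.kk * (t - t1))) * (1 - eps0)"
  proof -
    have "- (real CARD('f) - 1) * a_up * (t - t1) = - (L.kk * (t - t1))" by (simp add: L.kk_def algebra_simps)
    then show ?thesis by (simp add: phi_eps_def)
  qed
  have E1: "exp (- (L.kk * (t - t1))) \<le> 1" using L.kk_nonneg t by simp
  have phi0: "1 - exp (- (L.kk * (t - t1))) * (1 - eps0) \<ge> 0"
  proof -
    have "exp (- (L.kk * (t - t1))) * (1 - eps0) \<le> 1 - eps0"
      using mult_right_mono[OF E1, of "1 - eps0"] eps0 by simp
    then show ?thesis using eps0 by linarith
  qed
  have D0: "L.DM t0 \<ge> 0" using L.dd_le_DM[of i t0] L.dd_nonneg[of i t0] by linarith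
  show "ennreal (infdist (x i t) (leader_hull y t))
             \<le> ennreal (phi_eps CARD('f) a_up eps0 (t - t1) * dist_hull_max x y t0 + c0)
                + ennreal (2 * sqrt 2) *
                  (\<integral>\<^sup>+ s\<in>{t0..t1 + That}. ennreal (z_norm u w y s) \<partial>lborel)"
  proof (cases "(\<integral>\<^sup>+ s\<in>L.J. ennreal (L.zz s) \<partial>lborel) < \<infinity>")
    case False
    then have "(\<integral>\<^sup>+ s\<in>L.J. ennreal (L.zz s) \<partial>lborel) = top" by (simp add: less_top[symmetric])
    then show ?thesis unfolding nneq by (simp add: ennreal_mult_top)
  next
    case True
    interpret F: L11f P \<sigma> a b u w x y tauD a_lo a_up b_lo t0 T
      by unfold_locales (rule True)
    have R0: "F.R \<ge> 0" unfolding F.R_def by (rule integral_nonneg_AE) (simp add: L.zz_nonneg)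
    have main: "L.dd i t \<le> (1 - exp (- (L.kk * (t - t1))) * (1 - eps0)) * L.DM t0 + c0 + 2 * F.G T"
      by (rule F.final_bound) (use t t1 That eps0 c0 start in \<open>auto simp: T_def ddeq DMeq\<close>)
    have "ennreal (L.dd i t) \<le> ennreal ((1 - exp (- (L.kk * (t - t1))) * (1 - eps0)) * L.DM t0 + c0 + (2 * sqrt 2) * F.R)"
      using main F.G_T by (intro ennreal_leI) simp
    also have "\<dots> = ennreal ((1 - exp (- (L.kk * (t - t1))) * (1 - eps0)) * L.DM t0 + c0) + ennreal (2 * sqrt 2) * ennreal F.R"
    proof -
      have p1: "(1 - exp (- (L.kk * (t - t1))) * (1 - eps0)) * L.DM t0 + c0 \<ge> 0"
        using phi0 D0 c0 by simp
      have p2: "(2 * sqrt 2) * F.R \<ge> 0" using R0 by simp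
      show ?thesis
        using ennreal_plus[OF p1 p2] ennreal_mult[of "2 * sqrt 2" F.R] R0 by simp
    qed
    finally show ?thesis unfolding nneq F.nn_R ddeq DMeq phieq .
  qed
qed


end
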